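(* Let $d\ge1$, $T\ge1$, $\tau\in\{1,\dots,T\}$, learning rates $\eta_t>0$ and batch sizes $n_t\ge1$ with $n_\tau\ge2$. Let $\mu_g:\mathbb{R}^d\to\mathbb{R}^d$ and $\Sigma_g:\mathbb{R}^d\to\mathbb{R}^{d\times d}$ with $\Sigma_g(\theta)$ positive definite for all $\theta$, and let $\ell(\theta;x)$ be a differentiable loss and $z^*$ a fixed target data point. Consider two probability models for a parameter trajectory $(\theta_0,\theta_1,\dots,\theta_T)$ in $\mathbb{R}^d$, in both of which $\theta_0$ has the same distribution and the trajectory is a Markov chain: under $\mathbf{H_0}$, for every $t$, \[ \theta_t\mid\theta_{t-1}\sim\mathcal{N}\Big(\theta_{t-1}-\eta_t\mu_g(\theta_{t-1}),\ \tfrac{\eta_t^2\Sigma_g(\theta_{t-1})}{n_t}\Big); \] under $\mathbf{H_1^\tau}$ the same transition holds for $t\neq\tau$, while \[ \theta_\tau\mid\theta_{\tau-1}\sim\mathcal{N}\Big(\theta_{\tau-1}-\eta_\tau\frac{(n_\tau-1)\mu_g(\theta_{\tau-1})+\nabla_\theta\ell(\theta_{\tau-1};z^* )}{n_\tau},\ \frac{\eta_\tau^2(n_\tau-1)\Sigma_g(\theta_{\tau-1})}{n_\tau^2}\Big). \] Let $\mu_g=\mu_g(\theta_{\tau-1})$, $\Sigma_g=\Sigma_g(\theta_{\tau-1})$, $\delta_g=\nabla_\theta\ell(\theta_{\tau-1};z^* )-\mu_g$, $N=\theta_\tau-\theta_{\tau-1}+\eta_\tau\mu_g$ and $m^*=\delta_g^\top\Sigma_g^{-1}\delta_g$.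 Then the log of the ratio of the joint density of $(\theta_0,\dots,\theta_T)$ under $\mathbf{H_1^\tau}$ to that under $\mathbf{H_0}$ is \[ \log\mathrm{LR}=-\frac d2\log\Big(\frac{n_\tau-1}{n_\tau}\Big)-\frac{n_\tau}{2(n_\tau-1)\eta_\tau^2}N^\top\Sigma_g^{-1}N-\frac{n_\tau}{(n_\tau-1)\eta_\tau}N^\top\Sigma_g^{-1}\delta_g-\frac{m^*}{2(n_\tau-1)}. \]
   Context: This models (stochastic) gradient descent $\theta_t=\theta_{t-1}-\eta_tg_t$ where the batch gradient $g_t$ on $n_t$ points is assumed Gaussian with mean $\mu_g(\theta_{t-1})$ and covariance $\Sigma_g(\theta_{t-1})/n_t$ given $\theta_{t-1}$; under $\mathbf{H_1^\tau}$ one point of batch $\tau$ is replaced by the target $z^*$. *)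

theory Defs
  imports "HOL-Analysis.Analysis"
begin

definition pos_def_mat :: "real^'d^'d \<Rightarrow> bool" where
  "pos_def_mat S \<longleftrightarrow> transpose S = S \<and> (\<forall>x::real^'d. x \<noteq> 0 \<longrightarrow> x \<bullet> (S *v x) > 0)"

definition mvn_density :: "real^'d \<Rightarrow> real^'d^'d \<Rightarrow> real^'d \<Rightarrow> real" where
  "mvn_density m S x =
     exp (- (1/2) * ((x - m) \<bullet> (matrix_inv S *v (x - m))))
     / sqrt ((2 * pi) ^ CARD('d) * det S)"

definition mean_H0 :: "(nat \<Rightarrow> real) \<Rightarrow> (real^'d \<Rightarrow> real^'d) \<Rightarrow> nat \<Rightarrow> real^'d \<Rightarrow> real^'d" where
  "mean_H0 eta mu t th = th - eta t *\<^sub>R mu th"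

definition cov_H0 :: "(nat \<Rightarrow> real) \<Rightarrow> (nat \<Rightarrow> nat) \<Rightarrow> (real^'d \<Rightarrow> real^'d^'d) \<Rightarrow> nat \<Rightarrow> real^'d \<Rightarrow> real^'d^'d" where
  "cov_H0 eta n Sig t th = (eta t ^ 2 / real (n t)) *\<^sub>R Sig th"

text \<open>Transition mean / covariance at step t under H1^tau (target point in batch tau);
  grad th is the gradient of the loss at th for the target data point.\<close>
definition mean_H1 :: "nat \<Rightarrow> (nat \<Rightarrow> real) \<Rightarrow> (nat \<Rightarrow> nat) \<Rightarrow> (real^'d \<Rightarrow> real^'d) \<Rightarrow> (real^'d \<Rightarrow> real^'d)
      \<Rightarrow> nat \<Rightarrow> real^'d \<Rightarrow> real^'d" where
  "mean_H1 tau eta n mu grad t th =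
     (if t = tau then th - eta t *\<^sub>R ((1 / real (n t)) *\<^sub>R ((real (n t) - 1) *\<^sub>R mu th + grad th))
      else mean_H0 eta mu t th)"

definition cov_H1 :: "nat \<Rightarrow> (nat \<Rightarrow> real) \<Rightarrow> (nat \<Rightarrow> nat) \<Rightarrow> (real^'d \<Rightarrow> real^'d^'d) \<Rightarrow> nat \<Rightarrow> real^'d \<Rightarrow> real^'d^'d" where
  "cov_H1 tau eta n Sig t th =
     (if t = tau then (eta t ^ 2 * (real (n t) - 1) / real (n t) ^ 2) *\<^sub>R Sig th
      else cov_H0 eta n Sig t th)"

definition traj_density :: "(real^'d \<Rightarrow> real) \<Rightarrow> (nat \<Rightarrow> real^'d \<Rightarrow> real^'d) \<Rightarrow> (nat \<Rightarrow> real^'d \<Rightarrow> real^'d^'d)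
      \<Rightarrow> nat \<Rightarrow> (nat \<Rightarrow> real^'d) \<Rightarrow> real" where
  "traj_density p0 M C T th = p0 (th 0) * (\<Prod>t\<in>{1..T}. mvn_density (M t (th (t-1))) (C t (th (t-1))) (th t))"

end

theory Submission
  imports Defs
begin

lemma det_scaleR_mat: "det (c *\<^sub>R (A::real^'n^'n)) = c ^ CARD('n) * det A"
proof -
  have "c *\<^sub>R A = (\<chi> i. (\<lambda>_. c) i *s (\<lambda>i. A $ i) i)"
    by (vector)
  then show ?thesis using det_rows_mul[of "\<lambda>_. c" "\<lambda>i. A $ i"] by simp
qed

lemma matrix_inv_works:
  fixes A :: "real^'n^'n"
  assumes "invertible A"
  shows "A ** matrix_inv A = mat 1" "matrix_inv A ** A = mat 1"
  using someI_ex[OF assms[unfolded invertible_def]] unfolding matrix_inv_def by auto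

lemma matrix_inv_unique:
  fixes A B :: "real^'n^'n"
  assumes "A ** B = mat 1"
  shows "matrix_inv A = B"
proof -
  have BA: "B ** A = mat 1" using assms matrix_left_right_inverse by blast
  have inv: "invertible A" using assms invertible_right_inverse by blast
  have "matrix_inv A = (B ** A) ** matrix_inv A" using BA by simp
  also have "\<dots> = B ** (A ** matrix_inv A)" by (simp add: matrix_mul_assoc)
  also have "\<dots> = B" using matrix_inv_works(1)[OF inv] by simp
  finally show ?thesis .
qed

lemma matrix_inv_scaleR:
  fixes A :: "real^'n^'n"
  assumes "invertible A" "c \<noteq> 0"
  shows "matrix_inv (c *\<^sub>R A) = (1/c) *\<^sub>R matrix_inv A"
  apply (rule matrix_inv_unique)
  using matrix_inv_works(1)[OF assms(1)] assms(2) by (simp add: matrix_scalar_ac)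

lemma matrix_inv_sym:
  fixes A :: "real^'n^'n"
  assumes "invertible A" "transpose A = A"
  shows "transpose (matrix_inv A) = matrix_inv A"
proof -
  have "transpose (matrix_inv A ** A) = mat 1" using matrix_inv_works(2)[OF assms(1)] by simp
  then have "A ** transpose (matrix_inv A) = mat 1" using assms(2) by (simp add: matrix_transpose_mul)
  then show ?thesis using matrix_inv_unique by metis
qed

lemma sym_inner:
  fixes M :: "real^'n^'n"
  assumes "transpose M = M"
  shows "x \<bullet> (M *v y) = y \<bullet> (M *v x)"
proof -
  have "x \<bullet> (M *v y) = (x v* M) \<bullet> y" by (simp add: dot_lmul_matrix)
  also have "x v* M = transpose M *v x" by simp
  finally show ?thesis using assms by (simp add: inner_commute)
qed

lemma posdef_invertible:
  assumes "pos_def_mat (S::real^'n^'n)"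
  shows "invertible S"
proof -
  have "\<forall>x. S *v x = 0 \<longrightarrow> x = 0"
    using assms unfolding pos_def_mat_def by (metis inner_zero_right less_irrefl)
  then show ?thesis using matrix_left_invertible_ker invertible_left_inverse by blast
qed

theorem theorem4p1:
  fixes T tau :: nat
    and eta :: "nat \<Rightarrow> real" and n :: "nat \<Rightarrow> nat"
    and mu :: "real^'d \<Rightarrow> real^'d" and Sig :: "real^'d \<Rightarrow> real^'d^'d"
    and loss :: "real^'d \<Rightarrow> 'x \<Rightarrow> real" and zstar :: 'x
    and grad :: "real^'d \<Rightarrow> real^'d"
    and p0 :: "real^'d \<Rightarrow> real"
    and th :: "nat \<Rightarrow> real^'d"
  assumes "T \<ge> 1" and "1 \<le> tau" and "tau \<le> T"
    and "\<And>t. t \<in> {1..T} \<Longrightarrow> eta t > 0"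
    and "\<And>t. t \<in> {1..T} \<Longrightarrow> n t \<ge> 1"
    and "n tau \<ge> 2"
    and "\<And>x. pos_def_mat (Sig x)"
    and "\<And>x. ((\<lambda>y. loss y zstar) has_derivative (\<lambda>h. grad x \<bullet> h)) (at x)"
    and "p0 (th 0) > 0"
  shows
    "let muG = mu (th (tau - 1)); SigG = Sig (th (tau - 1));
         dg = grad (th (tau - 1)) - muG;
         N = th tau - th (tau - 1) + eta tau *\<^sub>R muG;
         Si = matrix_inv SigG;
         mstar = dg \<bullet> (Si *v dg);
         nt = real (n tau); et = eta tau
     in ln (traj_density p0 (mean_H1 tau eta n mu grad) (cov_H1 tau eta n Sig) T th
            / traj_density p0 (mean_H0 eta mu) (cov_H0 eta n Sig) T th)
        = - (real CARD('d) / 2) * ln ((nt - 1) / nt)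
          - nt / (2 * (nt - 1) * et ^ 2) * (N \<bullet> (Si *v N))
          - nt / ((nt - 1) * et) * (N \<bullet> (Si *v dg))
          - mstar / (2 * (nt - 1))"
proof -
  define a where "a = th (tau - 1)"
  define x where "x = th tau"
  define S where "S = Sig a"
  define Si where "Si = matrix_inv S"
  define nt where "nt = real (n tau)"
  define et where "et = eta tau"
  define dg where "dg = grad a - mu a"
  define N where "N = x - a + et *\<^sub>R mu a"
  define c0 where "c0 = et ^ 2 / nt"
  define c1 where "c1 = et ^ 2 * (nt - 1) / nt ^ 2"
  define K where "K = (2 * pi) ^ CARD('d)"
  have tau_in: "tau \<in> {1..T}" using assms by auto
  have nt2: "nt \<ge> 2" using assms(6) unfolding nt_def by simp
  have et0: "et > 0" using assms(4)[OF tau_in] unfolding et_def by simp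
  have c0p: "c0 > 0" unfolding c0_def using nt2 et0 by simp
  have c1p: "c1 > 0" unfolding c1_def using nt2 et0 by simp
  have Kp: "K > 0" unfolding K_def by simp
  have invS: "invertible S" unfolding S_def using assms(7) posdef_invertible by blast
  have symS: "transpose S = S" unfolding S_def using assms(7) pos_def_mat_def by blast
  have symSi: "transpose Si = Si" unfolding Si_def using matrix_inv_sym[OF invS symS] .
  have detS: "det S \<noteq> 0" using invS invertible_det_nz by blast
  define f1 where "f1 t = mvn_density (mean_H1 tau eta n mu grad t (th (t-1))) (cov_H1 tau eta n Sig t (th (t-1))) (th t)" for t
  define f0 where "f0 t = mvn_density (mean_H0 eta mu t (th (t-1))) (cov_H0 eta n Sig t (th (t-1))) (th t)" for t
  have eq: "f1 t = f0 t" if "t \<in> {1..T} - {tau}" for t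
    using that by (simp add: f1_def f0_def mean_H1_def cov_H1_def)
  have nz: "f0 t \<noteq> 0" if "t \<in> {1..T}" for t
  proof -
    have e: "eta t \<noteq> 0" using assms(4)[OF that] by simp
    have nn: "real (n t) \<noteq> 0" using assms(5)[OF that] by simp
    have "invertible (Sig (th (t-1)))" using assms(7) posdef_invertible by blast
    then have "det (Sig (th (t-1))) \<noteq> 0" using invertible_det_nz by blast
    then have "det (cov_H0 eta n Sig t (th (t-1))) \<noteq> 0"
      unfolding cov_H0_def det_scaleR_mat using e nn by simp
    then show ?thesis unfolding f0_def mvn_density_def by simp
  qed
  have P1: "(\<Prod>t\<in>{1..T}. f1 t) = f1 tau * (\<Prod>t\<in>{1..T}-{tau}. f0 t)"
    using prod.remove[OF _ tau_in, of f1] eq by simp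
  have P0: "(\<Prod>t\<in>{1..T}. f0 t) = f0 tau * (\<Prod>t\<in>{1..T}-{tau}. f0 t)"
    using prod.remove[OF _ tau_in, of f0] by simp
  have Pnz: "(\<Prod>t\<in>{1..T}-{tau}. f0 t) \<noteq> 0" using nz by (simp add: prod_zero_iff)
  have ratio: "traj_density p0 (mean_H1 tau eta n mu grad) (cov_H1 tau eta n Sig) T th
            / traj_density p0 (mean_H0 eta mu) (cov_H0 eta n Sig) T th = f1 tau / f0 tau"
    unfolding traj_density_def f1_def[symmetric] f0_def[symmetric] P1 P0
    using Pnz assms(9) by simp
  have v0: "x - mean_H0 eta mu tau a = N" unfolding mean_H0_def N_def et_def by simp
  have v1: "x - mean_H1 tau eta n mu grad tau a = N + (et / nt) *\<^sub>R dg"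
    unfolding mean_H1_def N_def dg_def et_def[symmetric] nt_def[symmetric] using nt2
    by (simp add: vec_eq_iff field_simps)
  define q where "q = N \<bullet> (Si *v N)"
  define r where "r = N \<bullet> (Si *v dg)"
  define m where "m = dg \<bullet> (Si *v dg)"
  have rs: "dg \<bullet> (Si *v N) = r" unfolding r_def using sym_inner[OF symSi] by simp
  define A0 where "A0 = - (1/2) * ((1/c0) * q)"
  define A1 where "A1 = - (1/2) * ((1/c1) * (q + 2 * (et/nt) * r + (et/nt)^2 * m))"
  have F0: "f0 tau = exp A0 / sqrt (K * (c0 ^ CARD('d) * det S))"
    unfolding f0_def mvn_density_def cov_H0_def a_def[symmetric] x_def[symmetric]
      S_def[symmetric] et_def[symmetric] nt_def[symmetric] c0_def[symmetric] K_def[symmetric] v0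
      det_scaleR_mat matrix_inv_scaleR[OF invS c0p[THEN less_imp_neq, symmetric]]
    by (simp add: A0_def q_def Si_def scaleR_matrix_vector_assoc[symmetric])
  have cov1: "cov_H1 tau eta n Sig tau a = c1 *\<^sub>R S"
    unfolding cov_H1_def c1_def et_def nt_def S_def by simp
  have F1: "f1 tau = exp A1 / sqrt (K * (c1 ^ CARD('d) * det S))"
    unfolding f1_def mvn_density_def a_def[symmetric] x_def[symmetric] cov1 v1
      det_scaleR_mat matrix_inv_scaleR[OF invS c1p[THEN less_imp_neq, symmetric]] K_def[symmetric]
    by (simp add: A1_def q_def Si_def[symmetric] r_def m_def rs scaleR_matrix_vector_assoc[symmetric] matrix_vector_mult_scaleR
         algebra_simps inner_add_left inner_add_right power2_eq_square)
  have KD: "sqrt (K * det S) \<noteq> 0" using Kp detS by simp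
  have "f1 tau / f0 tau = exp (A1 - A0) * (sqrt (c0 ^ CARD('d)) / sqrt (c1 ^ CARD('d)))"
    unfolding F0 F1 mult.assoc[symmetric] 
    apply (subst (1 2) mult.commute[of K]) 
    unfolding mult.assoc real_sqrt_mult
    using KD c0p c1p by (simp add: exp_diff field_simps)
  then have L: "ln (f1 tau / f0 tau) = A1 - A0 + real CARD('d) / 2 * (ln c0 - ln c1)"
    using c0p c1p apply (simp add: ln_mult ln_div ln_sqrt ln_realpow algebra_simps)
    by (simp add: field_simps)
  have cc: "ln c1 - ln c0 = ln ((nt - 1) / nt)"
  proof -
    have "c1 / c0 = (nt - 1) / nt" unfolding c0_def c1_def using nt2 et0 by (simp add: field_simps power2_eq_square)
    then show ?thesis using ln_div[of c1 c0] c0p c1p by simp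
  qed
  have L2: "ln (f1 tau / f0 tau) = A1 - A0 - (real CARD('d) / 2) * ln ((nt - 1) / nt)"
    unfolding L cc[symmetric] by (simp add: field_simps)
  have AA: "A1 - A0 = - nt / (2 * (nt - 1) * et ^ 2) * q
          - nt / ((nt - 1) * et) * r
          - m / (2 * (nt - 1))"
  proof -
    have n1: "nt - 1 \<noteq> 0" "nt \<noteq> 0" "et \<noteq> 0" using nt2 et0 by auto
    have ic0: "1 / c0 = nt / et^2" unfolding c0_def by simp
    have ic1: "1 / c1 = nt^2 / (et^2 * (nt - 1))" unfolding c1_def by simp
    have "A1 - A0 = - (1/2) * (nt^2 / (et^2 * (nt - 1)) * q - nt / et^2 * q)
        - (nt^2 / (et^2 * (nt - 1))) * (et/nt) * r - (1/2) * (nt^2 / (et^2 * (nt - 1))) * (et/nt)^2 * m"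
    proof -
      have gen: "\<And>u v k::real. - (1/2) * (u * (q + 2 * k * r + k^2 * m)) - (- (1/2) * (v * q))
         = - (1/2) * (u * q - v * q) - u * k * r - (1/2) * u * k^2 * m"
        by (simp add: algebra_simps)
      show ?thesis unfolding A0_def A1_def ic0 ic1 by (rule gen)
    qed
    also have "nt^2 / (et^2 * (nt - 1)) * q - nt / et^2 * q = nt / ((nt - 1) * et^2) * q"
      using n1 by (simp add: field_simps power2_eq_square)
    also have "(nt^2 / (et^2 * (nt - 1))) * (et/nt) = nt / ((nt - 1) * et)"
      using n1 by (simp add: field_simps power2_eq_square)
    also have "(1/2) * (nt^2 / (et^2 * (nt - 1))) * (et/nt)^2 = 1 / (2 * (nt - 1))"
      using n1 by (simp add: field_simps power2_eq_square)
    finally show ?thesis by simp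
  qed
  have main: "ln (f1 tau / f0 tau) = - (real CARD('d) / 2) * ln ((nt - 1) / nt)
          - nt / (2 * (nt - 1) * et ^ 2) * q
          - nt / ((nt - 1) * et) * r
          - m / (2 * (nt - 1))"
    unfolding L2 AA by simp
  show ?thesis
    unfolding Let_def ratio main a_def[symmetric] x_def[symmetric] S_def[symmetric]
      Si_def[symmetric] nt_def[symmetric] et_def[symmetric] dg_def[symmetric] N_def[symmetric]
      q_def r_def m_def ..
qed

end
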